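(* There exist an argumentation semantics $\sigma$ whose extensions are maximal conflict-free sets (w.r.t. set inclusion) and argumentation frameworks $AF=(AR,Attacks)$, $AF'=(AR',Attacks')$ with $AF\preceq_N AF'$ such that the following statement does NOT hold: if for all $E\in\sigma(AF)$ and all $E'\in\sigma(AF')$ we have $E'\not\subseteq AR$ or $E'=E$, then for all $E\in\sigma(AF)$ and all $E'\in\sigma(AF')$ we have $E\subseteq E'$.
   Context: An argumentation framework is a pair $(AR,Attacks)$ with $AR$ a finite set and $Attacks\subseteq AR\times AR$; $a$ attacks $b$ iff $(a,b)\in Attacks$. A set $S$ is conflict-free iff no element of $S$ attacks an element of $S$. An argumentation semantics $\sigma$ assigns to each argumentation framework a set $\sigma(AF)$ of subsets of $AR$; "$\sigma$'s extensions are maximal conflict-free sets" means that for every $AF$, every $E\in\sigma(AF)$ is a $\subseteq$-maximal conflict-free subset of the argument set of $AF$. $AF\preceq_N AF'$ (normal expansion) iff $AR\subseteq AR'$, $Attacks\subseteq Attacks'$ and no $(a,b)\in Attacks'\setminus Attacks$ has both $a,b\in AR$. *)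

theory Defs
  imports Main
begin

type_synonym 'a af = "'a set \<times> ('a \<times> 'a) set"

definition is_af :: "'a af \<Rightarrow> bool" where
  "is_af AF \<longleftrightarrow> finite (fst AF) \<and> snd AF \<subseteq> fst AF \<times> fst AF"

definition conflict_free :: "'a af \<Rightarrow> 'a set \<Rightarrow> bool" where
  "conflict_free AF S \<longleftrightarrow> (\<forall>a\<in>S. \<forall>b\<in>S. (a, b) \<notin> snd AF)"

definition maximal_cf :: "'a af \<Rightarrow> 'a set \<Rightarrow> bool" where
  "maximal_cf AF S \<longleftrightarrow> S \<subseteq> fst AF \<and> conflict_free AF S \<and>
     (\<forall>T. S \<subseteq> T \<and> T \<subseteq> fst AF \<and> conflict_free AF T \<longrightarrow> T = S)"

definition ext_maximal_cf :: "('a af \<Rightarrow> 'a set set) \<Rightarrow> bool" where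
  "ext_maximal_cf \<sigma> \<longleftrightarrow> (\<forall>AF. is_af AF \<longrightarrow> (\<forall>E\<in>\<sigma> AF. maximal_cf AF E))"

definition normal_expansion :: "'a af \<Rightarrow> 'a af \<Rightarrow> bool" where
  "normal_expansion AF AF' \<longleftrightarrow> fst AF \<subseteq> fst AF' \<and> snd AF \<subseteq> snd AF' \<and>
     (\<forall>(a, b)\<in>snd AF' - snd AF. \<not> (a \<in> fst AF \<and> b \<in> fst AF))"

end

theory Submission
  imports Defs
begin

lemma mcf1: "maximal_cf ({0::nat}, {}) {0}"
  unfolding maximal_cf_def conflict_free_def by auto

lemma mcf2: "maximal_cf ({0::nat,1}, {(1,0)}) {1}"
  unfolding maximal_cf_def conflict_free_def
proof (intro conjI allI impI)
  fix T :: "nat set"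
  assume h: "{1} \<subseteq> T \<and> T \<subseteq> fst ({0::nat,1}, {(1,0)}) \<and> (\<forall>a\<in>T. \<forall>b\<in>T. (a, b) \<notin> snd ({0::nat,1}, {(1::nat,0::nat)}))"
  then have "0 \<notin> T" by auto
  with h show "T = {1}" by auto
qed auto

theorem proposition51:
  shows "\<exists>(\<sigma> :: nat af \<Rightarrow> nat set set) AF AF'.
    ext_maximal_cf \<sigma> \<and> is_af AF \<and> is_af AF' \<and> normal_expansion AF AF' \<and>
    \<not> ((\<forall>E\<in>\<sigma> AF. \<forall>E'\<in>\<sigma> AF'. \<not> E' \<subseteq> fst AF \<or> E' = E) \<longrightarrow>
         (\<forall>E\<in>\<sigma> AF. \<forall>E'\<in>\<sigma> AF'. E \<subseteq> E'))"
proof -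
  define A :: "nat af" where "A = ({0}, {})"
  define B :: "nat af" where "B = ({0,1}, {(1,0)})"
  define s where "s = (\<lambda>X. if X = A then {{0::nat}} else if X = B then {{1}} else {})"
  have AB: "A \<noteq> B" unfolding A_def B_def by simp
  have sA: "s A = {{0}}" unfolding s_def by simp
  have sB: "s B = {{1}}" unfolding s_def using AB by simp
  have "ext_maximal_cf s"
    unfolding ext_maximal_cf_def
  proof (intro allI impI ballI)
    fix X E assume "E \<in> s X"
    then have "(X = A \<and> E = {0}) \<or> (X = B \<and> E = {1})"
      unfolding s_def by (simp split: if_splits)
    then show "maximal_cf X E" using mcf1 mcf2 unfolding A_def B_def by blast
  qed
  moreover have "is_af A" "is_af B" unfolding is_af_def A_def B_def by auto
  moreover have "normal_expansion A B" unfolding normal_expansion_def A_def B_def by auto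
  moreover have "fst A = {0}" unfolding A_def by simp
  then have "\<not> ((\<forall>E\<in>s A. \<forall>E'\<in>s B. \<not> E' \<subseteq> fst A \<or> E' = E) \<longrightarrow>
         (\<forall>E\<in>s A. \<forall>E'\<in>s B. E \<subseteq> E'))"
    unfolding sA sB by simp
  ultimately show ?thesis by (intro exI[of _ s] exI[of _ A] exI[of _ B]) simp
qed

end
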